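(* Let $\Psi$ be a universal resource. Then $\mathcal{N}_{\mathrm{LE}}(\Psi)=\infty$.
   Context: For an $N$-qubit $|\psi\rangle$ and an $n$-qubit $|\phi\rangle$, $n\le N$, write $|\psi\rangle\geq_{\mathrm{LOCC}}|\phi\rangle$ if for some set $A$ of $n$ qubits the transformation $|\psi\rangle\to|\phi\rangle^A|0\rangle^{\bar A}$ is achievable exactly and with probability one by LOCC (each qubit a separate party). A resource is an infinite family $\Psi$ of multi-qubit pure states; it is universal if for every $n$ and every $n$-qubit $|\phi\rangle$ some $|\psi\rangle\in\Psi$ has $|\psi\rangle\geq_{\mathrm{LOCC}}|\phi\rangle$. For a state $|\psi\rangle$ on qubits $V$ and distinct qubits $\alpha,\beta\in V$, set $E^{\alpha,\beta}_{\mathrm{Bell}}(|\psi\rangle)=1$ if LOCC can deterministically (with probability one) and exactly produce the Bell state $\frac{1}{\sqrt2}(|00\rangle+|11\rangle)$ on the qubits $\alpha,\beta$ starting from $|\psi\rangle$, and $0$ otherwise. $\mathcal{N}_{\mathrm{LE}}(|\psi\rangle)$ is the maximal size $|A|$ of a subset $A\subseteq V$ such that $E^{\alpha,\beta}_{\mathrm{Bell}}(|\psi\rangle)=1$ for all distinct $\alpha,\beta\in A$. $\mathcal{N}_{\mathrm{LE}}(\Psi):=\sup_{|\psi\rangle\in\Psi}\mathcal{N}_{\mathrm{LE}}(|\psi\rangle)$. *)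

theory Defs
  imports Complex_Main "HOL-Library.Extended_Nat"
begin

text \<open>An N-qubit state on qubits 0..N-1 is a function from computational basis
  strings (nat => bool, False outside 0..N-1) to complex amplitudes.\<close>
type_synonym qstate = "(nat \<Rightarrow> bool) \<Rightarrow> complex"

definition basis :: "nat \<Rightarrow> (nat \<Rightarrow> bool) set" where
  "basis N = {x. \<forall>i. N \<le> i \<longrightarrow> \<not> x i}"

definition snorm :: "nat \<Rightarrow> qstate \<Rightarrow> real" where
  "snorm N \<psi> = sqrt (\<Sum>x\<in>basis N. (cmod (\<psi> x))\<^sup>2)"

definition is_state :: "nat \<Rightarrow> qstate \<Rightarrow> bool" where
  "is_state N \<psi> \<longleftrightarrow> (\<forall>x. x \<notin> basis N \<longrightarrow> \<psi> x = 0) \<and> snorm N \<psi> = 1"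

text \<open>Apply a 2x2 operator M (M out in) to qubit k.\<close>
definition apply_local :: "nat \<Rightarrow> (bool \<Rightarrow> bool \<Rightarrow> complex) \<Rightarrow> qstate \<Rightarrow> qstate" where
  "apply_local k M \<psi> = (\<lambda>x. \<Sum>b\<in>(UNIV::bool set). M (x k) b * \<psi> (x(k := b)))"

definition kraus_complete :: "(bool \<Rightarrow> bool \<Rightarrow> complex) list \<Rightarrow> bool" where
  "kraus_complete Ms \<longleftrightarrow>
     (\<forall>a c. (\<Sum>M\<leftarrow>Ms. \<Sum>b\<in>(UNIV::bool set). cnj (M b a) * M b c) = (if a = c then 1 else 0))"

text \<open>Deterministic exact LOCC (finite-round protocol tree): from \<psi> one can reach,
  with probability one, a state in the target set T.\<close>
inductive locc_reach :: "nat \<Rightarrow> qstate set \<Rightarrow> qstate \<Rightarrow> bool" for N T where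
  finished: "\<psi> \<in> T \<Longrightarrow> locc_reach N T \<psi>"
| local_step: "k < N \<Longrightarrow> kraus_complete Ms \<Longrightarrow>
    (\<forall>M\<in>set Ms. snorm N (apply_local k M \<psi>) \<noteq> 0 \<longrightarrow>
       locc_reach N T (\<lambda>x. apply_local k M \<psi> x / complex_of_real (snorm N (apply_local k M \<psi>))))
    \<Longrightarrow> locc_reach N T \<psi>"

text \<open>Embedding an n-qubit state \<phi> into N qubits: qubit j of \<phi> placed on qubit f j,
  all other qubits in |0>.\<close>
definition embed :: "nat \<Rightarrow> nat \<Rightarrow> (nat \<Rightarrow> nat) \<Rightarrow> qstate \<Rightarrow> qstate" where
  "embed N n f \<phi> = (\<lambda>x. if x \<in> basis N \<and> (\<forall>i<N. i \<notin> f ` {..<n} \<longrightarrow> \<not> x i)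
                         then \<phi> (\<lambda>j. j < n \<and> x (f j)) else 0)"

definition locc_geq :: "nat \<Rightarrow> qstate \<Rightarrow> nat \<Rightarrow> qstate \<Rightarrow> bool" where
  "locc_geq N \<psi> n \<phi> \<longleftrightarrow> n \<le> N \<and>
     (\<exists>f. inj_on f {..<n} \<and> f ` {..<n} \<subseteq> {..<N} \<and>
        locc_reach N {s. \<exists>c. cmod c = 1 \<and> s = (\<lambda>x. c * embed N n f \<phi> x)} \<psi>)"

text \<open>States of the form Bell(\<alpha>,\<beta>) tensor (arbitrary state of the other qubits).\<close>
definition bell_target :: "nat \<Rightarrow> nat \<Rightarrow> nat \<Rightarrow> qstate set" where
  "bell_target N \<alpha> \<beta> = {s. is_state N s \<and>
      (\<forall>x. s x = (if x \<alpha> = x \<beta> then s (x(\<alpha> := False, \<beta> := False)) else 0))}"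

definition E_Bell :: "nat \<Rightarrow> qstate \<Rightarrow> nat \<Rightarrow> nat \<Rightarrow> bool" where
  "E_Bell N \<psi> \<alpha> \<beta> \<longleftrightarrow> locc_reach N (bell_target N \<alpha> \<beta>) \<psi>"

definition N_LE :: "nat \<Rightarrow> qstate \<Rightarrow> enat" where
  "N_LE N \<psi> = Sup {enat (card A) | A. A \<subseteq> {..<N} \<and>
      (\<forall>\<alpha>\<in>A. \<forall>\<beta>\<in>A. \<alpha> \<noteq> \<beta> \<longrightarrow> E_Bell N \<psi> \<alpha> \<beta>)}"

definition is_resource :: "(nat \<times> qstate) set \<Rightarrow> bool" where
  "is_resource \<Psi> \<longleftrightarrow> infinite \<Psi> \<and> (\<forall>(N, \<psi>)\<in>\<Psi>. is_state N \<psi>)"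

definition universal :: "(nat \<times> qstate) set \<Rightarrow> bool" where
  "universal \<Psi> \<longleftrightarrow> (\<forall>n \<phi>. is_state n \<phi> \<longrightarrow> (\<exists>(N, \<psi>)\<in>\<Psi>. locc_geq N \<psi> n \<phi>))"

definition N_LE_res :: "(nat \<times> qstate) set \<Rightarrow> enat" where
  "N_LE_res \<Psi> = (SUP p\<in>\<Psi>. N_LE (fst p) (snd p))"

end

theory Submission
  imports Defs
begin

definition G :: "nat \<Rightarrow> nat set \<Rightarrow> complex \<Rightarrow> complex \<Rightarrow> qstate" where
  "G N S a b = (\<lambda>x. if x \<in> basis N \<and> (\<forall>i. i \<notin> S \<longrightarrow> \<not> x i)
     then (if (\<forall>i\<in>S. x i) then b else if (\<forall>i\<in>S. \<not> x i) then a else 0) else 0)"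

lemma locc_trans:
  assumes "locc_reach N T \<psi>" and "\<And>s. s \<in> T \<Longrightarrow> locc_reach N T' s"
  shows "locc_reach N T' \<psi>"
  using assms(1)
proof induction
  case (finished \<psi>)
  then show ?case using assms(2) by blast
next
  case (local_step k Ms \<psi>)
  then show ?case by (intro locc_reach.local_step) auto
qed

lemma finite_basis: "finite (basis N)"
proof -
  have "basis N \<subseteq> (\<lambda>A i. i \<in> A) ` Pow {..<N}"
  proof
    fix x assume x: "x \<in> basis N"
    have "x = (\<lambda>i. i \<in> {i. x i})" by auto
    moreover have "{i. x i} \<in> Pow {..<N}" using x by (auto simp: basis_def not_le[symmetric])
    ultimately show "x \<in> (\<lambda>A i. i \<in> A) ` Pow {..<N}" by blast
  qed
  then show ?thesis by (rule finite_subset) auto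
qed

lemma sum_G:
  assumes "S \<noteq> {}" "S \<subseteq> {..<N}"
  shows "(\<Sum>x\<in>basis N. (cmod (G N S a b x))\<^sup>2) = (cmod a)\<^sup>2 + (cmod b)\<^sup>2"
proof -
  define x0 :: "nat \<Rightarrow> bool" where "x0 = (\<lambda>_. False)"
  define x1 :: "nat \<Rightarrow> bool" where "x1 = (\<lambda>i. i \<in> S)"
  have b0: "x0 \<in> basis N" by (simp add: x0_def basis_def)
  have b1: "x1 \<in> basis N" using assms(2) by (auto simp: x1_def basis_def)
  have ne: "x0 \<noteq> x1" using assms(1) by (auto simp: x0_def x1_def fun_eq_iff)
  have G0: "G N S a b x0 = a" using b0 assms(1) by (auto simp: G_def x0_def)
  have G1: "G N S a b x1 = b" using b1 by (auto simp: G_def x1_def)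
  have z: "G N S a b x = 0" if "x \<in> basis N - {x0, x1}" for x
  proof -
    have "x \<noteq> x0" "x \<noteq> x1" using that by auto
    then show ?thesis unfolding G_def x0_def x1_def fun_eq_iff by auto
  qed
  have "(\<Sum>x\<in>basis N. (cmod (G N S a b x))\<^sup>2) = (\<Sum>x\<in>{x0,x1}. (cmod (G N S a b x))\<^sup>2)"
    by (rule sum.mono_neutral_right) (use finite_basis b0 b1 z in auto)
  also have "\<dots> = (cmod a)\<^sup>2 + (cmod b)\<^sup>2" using ne G0 G1 by simp
  finally show ?thesis .
qed

lemma snorm_G:
  assumes "S \<noteq> {}" "S \<subseteq> {..<N}"
  shows "snorm N (G N S a b) = sqrt ((cmod a)\<^sup>2 + (cmod b)\<^sup>2)"
  using sum_G[OF assms] by (simp add: snorm_def)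

lemma snorm_scale: "snorm N (\<lambda>x. complex_of_real r * \<psi> x) = \<bar>r\<bar> * snorm N \<psi>"
proof -
  have "(\<Sum>x\<in>basis N. (cmod (complex_of_real r * \<psi> x))\<^sup>2) = r\<^sup>2 * (\<Sum>x\<in>basis N. (cmod (\<psi> x))\<^sup>2)"
    by (simp add: norm_mult power_mult_distrib sum_distrib_left)
  then show ?thesis by (simp add: snorm_def real_sqrt_mult)
qed

lemma basis_upd: "k < N \<Longrightarrow> x(k := v) \<in> basis N \<longleftrightarrow> x \<in> basis N"
  by (auto simp: basis_def)

definition Mx :: "complex \<Rightarrow> bool \<Rightarrow> bool \<Rightarrow> complex" where
  "Mx s = (\<lambda>out inn. if out then 0 else (if inn then s else 1) / complex_of_real (sqrt 2))"

lemma apply_Mx: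
  assumes "k \<notin> S'" "S' \<noteq> {}" "k < N"
  shows "apply_local k (Mx s) (G N (insert k S') a b) = (\<lambda>x. complex_of_real (1 / sqrt 2) * G N S' a (s * b) x)"
proof
  fix x
  show "apply_local k (Mx s) (G N (insert k S') a b) x = complex_of_real (1 / sqrt 2) * G N S' a (s * b) x"
  proof (cases "x k")
    case True
    then show ?thesis using assms by (auto simp: apply_local_def Mx_def G_def)
  next
    case False
    then have xk: "x(k := False) = x" by (auto simp: fun_eq_iff)
    have A: "G N (insert k S') a b x = (if x \<in> basis N \<and> (\<forall>i. i \<notin> S' \<longrightarrow> \<not> x i) \<and> (\<forall>i\<in>S'. \<not> x i) then a else 0)"
      using False assms(2) by (auto simp: G_def)
    have B: "G N (insert k S') a b (x(k := True)) = (if x \<in> basis N \<and> (\<forall>i. i \<notin> S' \<longrightarrow> \<not> x i) \<and> (\<forall>i\<in>S'. x i) then b else 0)"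
      using False assms by (auto simp: G_def basis_upd)
    have C: "G N S' a (s*b) x = (if x \<in> basis N \<and> (\<forall>i. i \<notin> S' \<longrightarrow> \<not> x i) then (if (\<forall>i\<in>S'. x i) then s*b else if (\<forall>i\<in>S'. \<not> x i) then a else 0) else 0)"
      by (simp add: G_def)
    have D: "(\<forall>i\<in>S'. x i) \<Longrightarrow> \<not> (\<forall>i\<in>S'. \<not> x i)" using assms(2) by auto
    show ?thesis
      unfolding apply_local_def UNIV_bool using False xk A B C D
      by (auto simp: Mx_def divide_simps)
  qed
qed


lemma sqrt2c: "complex_of_real (sqrt 2) * complex_of_real (sqrt 2) = 2"
  by (simp flip: of_real_mult)

lemma kraus_Mx: "kraus_complete [Mx 1, Mx (-1)]"
  unfolding kraus_complete_def Mx_def UNIV_bool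
  by (auto simp: field_simps sqrt2c)

lemma norm_after:
  assumes "S \<noteq> {}" "S \<subseteq> {..<N}" "cmod a = 1 / sqrt 2" "cmod b = 1 / sqrt 2"
  shows "snorm N (G N S a b) = 1"
  using assms by (simp add: snorm_G power_divide)

lemma bell_G:
  assumes "\<alpha> \<noteq> \<beta>" "\<alpha> < N" "\<beta> < N" "cmod a = 1 / sqrt 2"
  shows "G N ({\<alpha>, \<beta>}) a a \<in> bell_target N \<alpha> \<beta>"
proof -
  let ?S = "{\<alpha>, \<beta>}"
  have "snorm N (G N ?S a a) = 1" using assms by (intro norm_after) auto
  then have st: "is_state N (G N ?S a a)"
    unfolding is_state_def by (auto simp: G_def)
  have "G N ?S a a x = (if x \<alpha> = x \<beta> then G N ?S a a (x(\<alpha> := False, \<beta> := False)) else 0)" for x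
  proof -
    have bu: "x(\<alpha> := False, \<beta> := False) \<in> basis N \<longleftrightarrow> x \<in> basis N"
      using assms by (simp add: basis_upd)
    show ?thesis
    proof (cases "x \<alpha> = x \<beta>")
      case False
      then show ?thesis by (auto simp: G_def)
    next
      case True
      show ?thesis using bu True assms(1) by (cases "x \<alpha>") (auto simp: G_def)
    qed
  qed
  then show ?thesis using st by (simp add: bell_target_def)
qed

lemma phase_step:
  assumes "\<alpha> \<noteq> \<beta>" "\<alpha> < N" "\<beta> < N" "cmod a = 1 / sqrt 2" "cmod b = 1 / sqrt 2"
  shows "locc_reach N (bell_target N \<alpha> \<beta>) (G N ({\<alpha>, \<beta>}) a b)"
proof -
  let ?S = "{\<alpha>, \<beta>}"
  define U :: "bool \<Rightarrow> bool \<Rightarrow> complex" where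
    "U = (\<lambda>out inn. if out = inn then (if inn then a / b else 1) else 0)"
  have b0: "b \<noteq> 0" using assms(5) by auto
  have nab: "cmod (a / b) = 1" using assms(4,5) by (simp add: norm_divide)
  have ab: "cnj (a / b) * (a / b) = 1"
    using nab by (metis complex_norm_square mult.commute of_real_1 power_one complex_mult_cnj)
  have kc: "kraus_complete [U]"
    unfolding kraus_complete_def U_def UNIV_bool using ab by auto
  have ap: "apply_local \<alpha> U (G N ?S a b) = G N ?S a a"
  proof
    fix x :: "nat \<Rightarrow> bool"
    have nx: "x(\<alpha> := v) \<in> basis N \<longleftrightarrow> x \<in> basis N" for v using assms(2) by (rule basis_upd)
    show "apply_local \<alpha> U (G N ?S a b) x = G N ?S a a x"
    proof (cases "x \<alpha>")
      case True
      then have e: "x(\<alpha> := True) = x" by (simp add: fun_eq_iff)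
      show ?thesis unfolding apply_local_def UNIV_bool U_def using b0 True e nx assms(1)
        by (auto simp: G_def)
    next
      case False
      then have e: "x(\<alpha> := False) = x" by (simp add: fun_eq_iff)
      show ?thesis unfolding apply_local_def UNIV_bool U_def using b0 False e nx assms(1)
        by (auto simp: G_def)
    qed
  qed
  have n1: "snorm N (G N ?S a a) = 1" using assms by (intro norm_after) auto
  have fin: "locc_reach N (bell_target N \<alpha> \<beta>) (G N ?S a a)"
    using bell_G[OF assms(1-4)] by (rule locc_reach.finished)
  show ?thesis
    by (rule locc_reach.local_step[OF assms(2) kc]) (simp add: ap n1 fin)
qed


lemma reach_bell:
  assumes "finite R"
  shows "\<alpha> \<notin> R \<Longrightarrow> \<beta> \<notin> R \<Longrightarrow> \<alpha> \<noteq> \<beta> \<Longrightarrow> \<alpha> < N \<Longrightarrow> \<beta> < N \<Longrightarrow> R \<subseteq> {..<N} \<Longrightarrow>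
    cmod a = 1 / sqrt 2 \<Longrightarrow> cmod b = 1 / sqrt 2 \<Longrightarrow>
    locc_reach N (bell_target N \<alpha> \<beta>) (G N (insert \<alpha> (insert \<beta> R)) a b)"
  using assms
proof (induction R arbitrary: a b rule: finite_induct)
  case empty
  then show ?case using phase_step by simp
next
  case (insert k R)
  let ?S' = "insert \<alpha> (insert \<beta> R)"
  have kS: "k \<notin> ?S'" using insert by auto
  have kN: "k < N" using insert by auto
  have eq: "insert \<alpha> (insert \<beta> (insert k R)) = insert k ?S'" by auto
  have SN: "?S' \<subseteq> {..<N}" using insert by auto
  show ?case unfolding eq
  proof (rule locc_reach.local_step[OF kN kraus_Mx], intro ballI impI)
    fix M assume M: "M \<in> set [Mx 1, Mx (-1)]"
    then obtain s :: complex where Ms: "M = Mx s" and s: "cmod s = 1" by auto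
    have ap: "apply_local k M (G N (insert k ?S') a b) = (\<lambda>x. complex_of_real (1 / sqrt 2) * G N ?S' a (s * b) x)"
      unfolding Ms by (rule apply_Mx[OF kS]) (use kN in auto)
    have nb: "cmod (s * b) = 1 / sqrt 2" using s insert.prems by (simp add: norm_mult)
    have n1: "snorm N (G N ?S' a (s * b)) = 1"
      by (rule norm_after) (use SN nb insert.prems in auto)
    have ns: "snorm N (apply_local k M (G N (insert k ?S') a b)) = 1 / sqrt 2"
      unfolding ap snorm_scale n1 by simp
    have "(\<lambda>x. apply_local k M (G N (insert k ?S') a b) x /
            complex_of_real (snorm N (apply_local k M (G N (insert k ?S') a b)))) = G N ?S' a (s * b)"
      unfolding ns unfolding ap by (simp add: fun_eq_iff)
    moreover have "locc_reach N (bell_target N \<alpha> \<beta>) (G N ?S' a (s * b))"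
      using insert nb by auto
    ultimately show "locc_reach N (bell_target N \<alpha> \<beta>)
          (\<lambda>x. apply_local k M (G N (insert k ?S') a b) x /
            complex_of_real (snorm N (apply_local k M (G N (insert k ?S') a b))))" by simp
  qed
qed


lemma embed_G:
  assumes "f ` {..<m} \<subseteq> {..<N}"
  shows "embed N m f (G m {..<m} a b) = G N (f ` {..<m}) a b"
proof
  fix x :: "nat \<Rightarrow> bool"
  let ?y = "\<lambda>j. j < m \<and> x (f j)"
  have yb: "?y \<in> basis m" by (simp add: basis_def)
  have c1: "(x \<in> basis N \<and> (\<forall>i<N. i \<notin> f ` {..<m} \<longrightarrow> \<not> x i)) \<longleftrightarrow>
            (x \<in> basis N \<and> (\<forall>i. i \<notin> f ` {..<m} \<longrightarrow> \<not> x i))"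
    by (auto simp: basis_def) (meson not_le)
  have c2: "(\<forall>i\<in>{..<m}. ?y i) \<longleftrightarrow> (\<forall>i\<in>f ` {..<m}. x i)" by auto
  have c3: "(\<forall>i\<in>{..<m}. \<not> ?y i) \<longleftrightarrow> (\<forall>i\<in>f ` {..<m}. \<not> x i)" by auto
  show "embed N m f (G m {..<m} a b) x = G N (f ` {..<m}) a b x"
    unfolding embed_def G_def using yb c1 c2 c3 by auto
qed

lemma big_N_LE:
  assumes "universal \<Psi>" "2 \<le> m"
  shows "enat m \<le> N_LE_res \<Psi>"
proof -
  define h :: complex where "h = complex_of_real (1 / sqrt 2)"
  have hn: "cmod h = 1 / sqrt 2" unfolding h_def norm_of_real by simp
  define \<phi> where "\<phi> = G m {..<m} h h"
  have "snorm m \<phi> = 1" unfolding \<phi>_def by (rule norm_after) (use assms(2) hn in \<open>auto simp: lessThan_empty_iff\<close>)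
  then have st: "is_state m \<phi>" unfolding is_state_def \<phi>_def by (auto simp: G_def)
  obtain N \<psi> where P: "(N, \<psi>) \<in> \<Psi>" and lg: "locc_geq N \<psi> m \<phi>"
    using assms(1) st unfolding universal_def by blast
  then obtain f where inj: "inj_on f {..<m}" and fim: "f ` {..<m} \<subseteq> {..<N}" and
    r: "locc_reach N {s. \<exists>c. cmod c = 1 \<and> s = (\<lambda>x. c * embed N m f \<phi> x)} \<psi>"
    unfolding locc_geq_def by blast
  define A where "A = f ` {..<m}"
  have cardA: "card A = m" unfolding A_def using inj by (simp add: card_image)
  have AN: "A \<subseteq> {..<N}" using fim A_def by simp
  have fA: "finite A" unfolding A_def by simp
  have EB: "E_Bell N \<psi> \<alpha> \<beta>" if "\<alpha> \<in> A" "\<beta> \<in> A" "\<alpha> \<noteq> \<beta>" for \<alpha> \<beta>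
    unfolding E_Bell_def
  proof (rule locc_trans[OF r])
    fix s assume "s \<in> {s. \<exists>c. cmod c = 1 \<and> s = (\<lambda>x. c * embed N m f \<phi> x)}"
    then obtain c where c: "cmod c = 1" and s: "s = (\<lambda>x. c * embed N m f \<phi> x)" by blast
    have "s = G N A (c * h) (c * h)"
      unfolding s \<phi>_def embed_G[OF fim] A_def by (auto simp: G_def fun_eq_iff)
    moreover have ins: "insert \<alpha> (insert \<beta> (A - {\<alpha>, \<beta>})) = A" using that by auto
    moreover have "locc_reach N (bell_target N \<alpha> \<beta>) (G N (insert \<alpha> (insert \<beta> (A - {\<alpha>, \<beta>}))) (c * h) (c * h))"
      by (rule reach_bell) (use fA that AN c hn in \<open>auto simp: norm_mult\<close>)
    ultimately show "locc_reach N (bell_target N \<alpha> \<beta>) s" by simp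
  qed
  have "enat m \<le> N_LE N \<psi>"
    unfolding N_LE_def using cardA AN EB by (intro Sup_upper) blast
  also have "\<dots> \<le> N_LE_res \<Psi>"
    unfolding N_LE_res_def using P by (intro SUP_upper2[of "(N, \<psi>)"]) auto
  finally show ?thesis .
qed

theorem theorem6:
  assumes "is_resource \<Psi>" and "universal \<Psi>"
  shows "N_LE_res \<Psi> = \<infinity>"
proof (rule ccontr)
  assume "N_LE_res \<Psi> \<noteq> \<infinity>"
  then obtain k where k: "N_LE_res \<Psi> = enat k" by auto
  have "enat (k + 2) \<le> N_LE_res \<Psi>" by (rule big_N_LE[OF assms(2)]) simp
  then show False using k by simp
qed

end
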